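(* Let $\pi_1,\pi_2$ be probability vectors on the finite set $E$ with strictly positive entries, and take $P_{x,x'}=\pi_1(x')$, $Q_{y,y'}=\pi_2(y')$ for all $x,x',y,y'\in E$. Let $f:E\times E\to\mathbb Z$ with $\pi_1\otimes\pi_2(f)<0$ and $f(x,y)>0$ for some $(x,y)$. Then $\theta^*>0$ solves $\sum_{x,y}e^{\theta f(x,y)}\pi_1(x)\pi_2(y)=1$, $\pi^*(x,y)=e^{\theta^*f(x,y)}\pi_1(x)\pi_2(y)$, and with $\pi^*_1,\pi^*_2$ the marginals of $\pi^*$, $$J_1=2\theta^*\pi^*(f)-H(\pi^*_1\mid\pi_1),\qquad J_2=2\theta^*\pi^*(f)-H(\pi^*_2\mid\pi_2).$$ Consequently $2\min\{J_1,J_2\}>3\theta^*\pi^*(f)$ holds if and only if $$H(\pi^*\mid\pi_1\otimes\pi_2)>2\max\{H(\pi^*_1\mid\pi_1),H(\pi^*_2\mid\pi_2)\}.$$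
   Context: $H(\alpha\mid\beta)=\sum_z\alpha(z)\log(\alpha(z)/\beta(z))$ is relative entropy; $\nu(f)=\sum f\,d\nu$. For general irreducible stochastic $P,Q$ on $E$: $\Phi(\theta)_{(x,y),(x',y')}=e^{\theta f(x',y')}P_{x,x'}Q_{y,y'}$ with spectral radius $\varphi(\theta)$; $\theta^*>0$ is the unique positive solution of $\varphi(\theta)=1$; $r^*$ a positive right eigenvector of $\Phi(\theta^* )$ for eigenvalue $1$; $R^*_{(x,y),(x',y')}=\frac{r^*(x',y')}{r^*(x,y)}\Phi(\theta^* )_{(x,y),(x',y')}$; $\pi^*$ its invariant probability vector; $\hat\pi(x,y,x',y')=\pi^*(x,y)R^*_{(x,y),(x',y')}$; $f$ is also regarded as a function on $E^2\times E^2$ by $f(x,y,x',y')=f(x',y')$. For $g:E^2\times E^2\to\mathbb R$, $\varphi_1(g),\varphi_2(g)$ are the spectral radii of $\Phi_1(g)_{(x,y,z),(x',y',z')}=\exp(g(x,y,x',y')+g(x,z,x',z'))P_{x,x'}Q_{y,y'}Q_{z,z'}$ and $\Phi_2(g)_{(x,w,y),(x',w',y')}=\exp(g(x,y,x',y')+g(w,y,w',y'))P_{x,x'}P_{w,w'}Q_{y,y'}$, and $J_i=\sup_g\{2\hat\pi(g)-\log\varphi_i(g)\}$, $i=1,2$. *)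

theory Defs
  imports Complex_Main "HOL-Library.Extended_Real"
begin

definition spectral_radius :: "('i::finite \<Rightarrow> 'i \<Rightarrow> real) \<Rightarrow> real" where
  "spectral_radius M = Sup {cmod z | z. \<exists>v::'i \<Rightarrow> complex. v \<noteq> (\<lambda>_. 0) \<and>
      (\<forall>i. (\<Sum>j\<in>UNIV. complex_of_real (M i j) * v j) = z * v i)}"

definition rel_entropy :: "('z::finite \<Rightarrow> real) \<Rightarrow> ('z \<Rightarrow> real) \<Rightarrow> real" where
  "rel_entropy \<alpha> \<beta> = (\<Sum>z\<in>UNIV. \<alpha> z * ln (\<alpha> z / \<beta> z))"

definition integ :: "('z::finite \<Rightarrow> real) \<Rightarrow> ('z \<Rightarrow> real) \<Rightarrow> real" where
  "integ \<nu> g = (\<Sum>z\<in>UNIV. \<nu> z * g z)"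

definition Phi :: "('a \<Rightarrow> 'a \<Rightarrow> real) \<Rightarrow> ('a \<Rightarrow> 'a \<Rightarrow> real) \<Rightarrow> ('a \<times> 'a \<Rightarrow> int)
    \<Rightarrow> real \<Rightarrow> 'a \<times> 'a \<Rightarrow> 'a \<times> 'a \<Rightarrow> real" where
  "Phi P Q f \<theta> = (\<lambda>(x, y) (x', y'). exp (\<theta> * real_of_int (f (x', y'))) * P x x' * Q y y')"

definition varphi :: "('a::finite \<Rightarrow> 'a \<Rightarrow> real) \<Rightarrow> ('a \<Rightarrow> 'a \<Rightarrow> real) \<Rightarrow> ('a \<times> 'a \<Rightarrow> int)
    \<Rightarrow> real \<Rightarrow> real" where
  "varphi P Q f \<theta> = spectral_radius (Phi P Q f \<theta>)"

definition theta_star :: "('a::finite \<Rightarrow> 'a \<Rightarrow> real) \<Rightarrow> ('a \<Rightarrow> 'a \<Rightarrow> real) \<Rightarrow> ('a \<times> 'a \<Rightarrow> int) \<Rightarrow> real" where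
  "theta_star P Q f = (THE \<theta>. \<theta> > 0 \<and> varphi P Q f \<theta> = 1)"

definition r_star :: "('a::finite \<Rightarrow> 'a \<Rightarrow> real) \<Rightarrow> ('a \<Rightarrow> 'a \<Rightarrow> real) \<Rightarrow> ('a \<times> 'a \<Rightarrow> int) \<Rightarrow> 'a \<times> 'a \<Rightarrow> real" where
  "r_star P Q f = (SOME r. (\<forall>u. r u > 0) \<and>
      (\<forall>u. (\<Sum>w\<in>UNIV. Phi P Q f (theta_star P Q f) u w * r w) = r u))"

definition R_star :: "('a::finite \<Rightarrow> 'a \<Rightarrow> real) \<Rightarrow> ('a \<Rightarrow> 'a \<Rightarrow> real) \<Rightarrow> ('a \<times> 'a \<Rightarrow> int)
    \<Rightarrow> 'a \<times> 'a \<Rightarrow> 'a \<times> 'a \<Rightarrow> real" where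
  "R_star P Q f u w = r_star P Q f w / r_star P Q f u * Phi P Q f (theta_star P Q f) u w"

definition pi_star :: "('a::finite \<Rightarrow> 'a \<Rightarrow> real) \<Rightarrow> ('a \<Rightarrow> 'a \<Rightarrow> real) \<Rightarrow> ('a \<times> 'a \<Rightarrow> int) \<Rightarrow> 'a \<times> 'a \<Rightarrow> real" where
  "pi_star P Q f = (SOME p. (\<forall>u. p u \<ge> 0) \<and> (\<Sum>u\<in>UNIV. p u) = 1 \<and>
      (\<forall>w. (\<Sum>u\<in>UNIV. p u * R_star P Q f u w) = p w))"

definition pi_hat :: "('a::finite \<Rightarrow> 'a \<Rightarrow> real) \<Rightarrow> ('a \<Rightarrow> 'a \<Rightarrow> real) \<Rightarrow> ('a \<times> 'a \<Rightarrow> int)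
    \<Rightarrow> ('a \<times> 'a) \<times> ('a \<times> 'a) \<Rightarrow> real" where
  "pi_hat P Q f = (\<lambda>(u, w). pi_star P Q f u * R_star P Q f u w)"

definition Phi1 :: "('a \<Rightarrow> 'a \<Rightarrow> real) \<Rightarrow> ('a \<Rightarrow> 'a \<Rightarrow> real) \<Rightarrow> (('a \<times> 'a) \<times> ('a \<times> 'a) \<Rightarrow> real)
    \<Rightarrow> 'a \<times> 'a \<times> 'a \<Rightarrow> 'a \<times> 'a \<times> 'a \<Rightarrow> real" where
  "Phi1 P Q g = (\<lambda>(x, y, z) (x', y', z').
     exp (g ((x, y), (x', y')) + g ((x, z), (x', z'))) * P x x' * Q y y' * Q z z')"

definition Phi2 :: "('a \<Rightarrow> 'a \<Rightarrow> real) \<Rightarrow> ('a \<Rightarrow> 'a \<Rightarrow> real) \<Rightarrow> (('a \<times> 'a) \<times> ('a \<times> 'a) \<Rightarrow> real)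
    \<Rightarrow> 'a \<times> 'a \<times> 'a \<Rightarrow> 'a \<times> 'a \<times> 'a \<Rightarrow> real" where
  "Phi2 P Q g = (\<lambda>(x, w, y) (x', w', y').
     exp (g ((x, y), (x', y')) + g ((w, y), (w', y'))) * P x x' * P w w' * Q y y')"

definition J1 :: "('a::finite \<Rightarrow> 'a \<Rightarrow> real) \<Rightarrow> ('a \<Rightarrow> 'a \<Rightarrow> real) \<Rightarrow> ('a \<times> 'a \<Rightarrow> int) \<Rightarrow> ereal" where
  "J1 P Q f = (SUP g. ereal (2 * integ (pi_hat P Q f) g - ln (spectral_radius (Phi1 P Q g))))"

definition J2 :: "('a::finite \<Rightarrow> 'a \<Rightarrow> real) \<Rightarrow> ('a \<Rightarrow> 'a \<Rightarrow> real) \<Rightarrow> ('a \<times> 'a \<Rightarrow> int) \<Rightarrow> ereal" where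
  "J2 P Q f = (SUP g. ereal (2 * integ (pi_hat P Q f) g - ln (spectral_radius (Phi2 P Q g))))"

end

theory Submission
  imports Defs "HOL-Analysis.Analysis"
begin

lemma perron_pos:
  fixes M :: "'i::finite \<Rightarrow> 'i \<Rightarrow> real"
  assumes Mpos: "\<And>i j. M i j > 0"
  shows "\<exists>l v. l > 0 \<and> (\<forall>i. v i > 0) \<and> (\<forall>i. (\<Sum>j\<in>UNIV. M i j * v j) = l * v i)"
proof -
  have Mnn: "\<And>i j. M i j \<ge> 0" using Mpos less_imp_le by blast
  define S where "S = {x::real^'i. (\<forall>i. 0 \<le> x$i) \<and> sum (\<lambda>i. x$i) UNIV = 1}"
  define D where "D = (\<lambda>x::real^'i. \<Sum>k\<in>UNIV. \<Sum>j\<in>UNIV. M k j * x$j)"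
  define F where "F = (\<lambda>x::real^'i. \<chi> i. (\<Sum>j\<in>UNIV. M i j * x$j) / D x)"
  have Dpos: "D x > 0" if "x \<in> S" for x
  proof -
    from that have x0: "\<forall>i. 0 \<le> x$i" and x1: "sum (\<lambda>i. x$i) UNIV = 1" by (auto simp: S_def)
    obtain j0 where "x$j0 \<noteq> 0" using x1 by (metis (mono_tags, lifting) sum.neutral zero_neq_one)
    hence j0: "x$j0 > 0" using x0[rule_format, of j0] by linarith
    obtain k0 :: 'i where True by simp
    have "M k0 j0 * x$j0 > 0" using j0 Mpos by simp
    also have "M k0 j0 * x$j0 \<le> (\<Sum>j\<in>UNIV. M k0 j * x$j)"
      by (rule member_le_sum) (use x0 Mnn in \<open>auto intro!: mult_nonneg_nonneg\<close>)
    also have "\<dots> \<le> D x" unfolding D_def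
      by (rule member_le_sum) (use x0 Mnn in \<open>auto intro!: sum_nonneg mult_nonneg_nonneg\<close>)
    finally show ?thesis .
  qed
  have rowpos: "(\<Sum>j\<in>UNIV. M i j * x$j) > 0" if "x \<in> S" for x i
  proof -
    from that have x0: "\<forall>i. 0 \<le> x$i" and x1: "sum (\<lambda>i. x$i) UNIV = 1" by (auto simp: S_def)
    obtain j0 where "x$j0 \<noteq> 0" using x1 by (metis (mono_tags, lifting) sum.neutral zero_neq_one)
    hence j0: "x$j0 > 0" using x0[rule_format, of j0] by linarith
    have "M i j0 * x$j0 > 0" using j0 Mpos by simp
    also have "M i j0 * x$j0 \<le> (\<Sum>j\<in>UNIV. M i j * x$j)"
      by (rule member_le_sum) (use x0 Mnn in \<open>auto intro!: mult_nonneg_nonneg\<close>)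
    finally show ?thesis .
  qed
  have "compact S"
  proof -
    have "closed S" unfolding S_def
      by (intro closed_Collect_conj closed_Collect_all closed_Collect_le closed_Collect_eq continuous_intros)
    moreover have "bounded S"
    proof -
      have "norm x \<le> 1" if "x \<in> S" for x
        using norm_le_l1_cart[of x] that by (auto simp: S_def)
      then show ?thesis unfolding bounded_iff by blast
    qed
    ultimately show ?thesis using compact_eq_bounded_closed by blast
  qed
  moreover have "convex S" unfolding S_def convex_def
    by (auto simp: sum.distrib sum_distrib_left[symmetric])
  moreover have "S \<noteq> {}"
  proof -
    let ?x = "\<chi> i::'i. 1 / real CARD('i)"
    have "?x \<in> S" by (simp add: S_def)
    then show ?thesis by blast
  qed
  moreover have "continuous_on S F" unfolding F_def D_def
    by (intro continuous_intros) (use Dpos[unfolded D_def] in force)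
  moreover have "F \<in> S \<rightarrow> S"
  proof
    fix x assume x: "x \<in> S"
    have "sum (\<lambda>i. F x $ i) UNIV = 1"
      using Dpos[OF x] by (simp add: F_def sum_divide_distrib[symmetric] D_def)
    moreover have "\<forall>i. 0 \<le> F x $ i"
      using Dpos[OF x] rowpos[OF x] by (simp add: F_def less_imp_le)
    ultimately show "F x \<in> S" by (simp add: S_def)
  qed
  ultimately obtain x where x: "x \<in> S" "F x = x" using brouwer by metis
  show ?thesis
  proof (intro exI conjI allI)
    show "D x > 0" using Dpos[OF x(1)] .
    fix i
    have e: "(\<Sum>j\<in>UNIV. M i j * x$j) / D x = x$i" using x(2) by (metis F_def vec_lambda_beta)
    then show "(\<Sum>j\<in>UNIV. M i j * x$j) = D x * x$i" using Dpos[OF x(1)] by (simp add: field_simps)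
    show "x$i > 0" using e rowpos[OF x(1)] Dpos[OF x(1)] by (metis divide_pos_pos)
  qed
qed

lemma exp_conv: "exp ((1 - t) * a + t * b) \<le> (1 - t) * exp a + t * exp (b::real)"
  if "0 \<le> t" "t \<le> 1" for t
  using convex_onD[OF exp_convex, of t a b] that by simp

lemma theta_unique:
  fixes c F :: "'k \<Rightarrow> real" and K :: "'k set"
  assumes fin: "finite K" and cpos: "\<And>k. k \<in> K \<Longrightarrow> c k > 0"
    and csum: "(\<Sum>k\<in>K. c k) = 1" and neg: "(\<Sum>k\<in>K. c k * F k) < 0"
    and kk: "kk \<in> K" "F kk \<ge> 1"
  shows "\<exists>!\<theta>. \<theta> > 0 \<and> (\<Sum>k\<in>K. c k * exp (\<theta> * F k)) = 1"
proof -
  define Mf where "Mf = (\<lambda>\<theta>. \<Sum>k\<in>K. c k * exp (\<theta> * F k))"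
  have M0: "Mf 0 = 1" using csum by (simp add: Mf_def)
  have D: "DERIV Mf 0 :> (\<Sum>k\<in>K. c k * F k)" unfolding Mf_def
    by (auto intro!: derivative_eq_intros simp: mult.commute)
  obtain d where d: "d > 0" "\<And>h. h > 0 \<Longrightarrow> h < d \<Longrightarrow> Mf h < 1"
    using DERIV_neg_dec_right[OF D neg] M0 by force
  have cont: "continuous_on A Mf" for A unfolding Mf_def by (intro continuous_intros)
  have low: "Mf \<theta> \<ge> c kk * (1 + \<theta>)" if "\<theta> \<ge> 0" for \<theta>
  proof -
    have "c kk * (1 + \<theta>) \<le> c kk * exp (\<theta> * F kk)"
    proof -
      have "1 + \<theta> \<le> 1 + \<theta> * F kk" using that kk(2) by (simp add: mult_left_mono[of 1 "F kk" \<theta>, simplified])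
      also have "\<dots> \<le> exp (\<theta> * F kk)" by (rule exp_ge_add_one_self)
      finally show ?thesis using cpos[OF kk(1)] by simp
    qed
    also have "\<dots> \<le> Mf \<theta>" unfolding Mf_def
      by (rule member_le_sum) (use kk cpos fin in \<open>auto intro!: mult_nonneg_nonneg less_imp_le\<close>)
    finally show ?thesis .
  qed
  define h where "h = d / 2"
  define T where "T = h + 1 / c kk"
  have ck0: "c kk > 0" using cpos kk by simp
  have hT: "h \<le> T" using ck0 by (simp add: T_def)
  have Mh: "Mf h \<le> 1" using d by (auto simp: h_def intro!: less_imp_le)
  have MT: "1 \<le> Mf T"
  proof -
    have "1 \<le> c kk * (1 + T)" using ck0 d by (simp add: T_def h_def field_simps)
    also have "\<dots> \<le> Mf T" using low[of T] d ck0 by (simp add: T_def h_def)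
    finally show ?thesis .
  qed
  obtain th where th: "h \<le> th" "th \<le> T" "Mf th = 1"
    using IVT'[of Mf h 1 T, OF Mh MT hT cont] by blast
  have thpos: "th > 0" using th d by (simp add: h_def)
  have uniq: False if "a > 0" "b > 0" "a < b" "Mf a = 1" "Mf b = 1" for a b
  proof -
    define e where "e = min (d/2) (a/2)"
    have e: "e > 0" "e < d" "e < a" using d that by (auto simp: e_def)
    have Me: "Mf e < 1" using d e by simp
    define t where "t = (a - e) / (b - e)"
    have t: "0 \<le> t" "t \<le> 1" "t < 1 \<or> True" using e that by (auto simp: t_def)
    have be: "b - e \<noteq> 0" using e that by simp
    have tbe: "t * (b - e) = a - e" using be by (simp add: t_def)
    have aeq: "a = (1 - t) * e + t * b" using tbe by (simp add: algebra_simps)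
    have "Mf a = (\<Sum>k\<in>K. c k * exp ((1 - t) * (e * F k) + t * (b * F k)))"
      unfolding Mf_def aeq by (simp add: algebra_simps)
    also have "\<dots> \<le> (\<Sum>k\<in>K. (1 - t) * (c k * exp (e * F k)) + t * (c k * exp (b * F k)))"
    proof (rule sum_mono)
      fix k assume k: "k \<in> K"
      have "c k * exp ((1 - t) * (e * F k) + t * (b * F k)) \<le> c k * ((1 - t) * exp (e * F k) + t * exp (b * F k))"
        by (rule mult_left_mono[OF exp_conv]) (use cpos[OF k] t in auto)
      then show "c k * exp ((1 - t) * (e * F k) + t * (b * F k)) \<le> (1 - t) * (c k * exp (e * F k)) + t * (c k * exp (b * F k))"
        by (simp add: algebra_simps)
    qed
    also have "\<dots> = (1 - t) * Mf e + t * Mf b"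
      by (simp add: Mf_def sum.distrib sum_distrib_left)
    also have "\<dots> < 1"
    proof -
      have "t < 1" using e that by (simp add: t_def)
      then have "(1 - t) * Mf e < (1 - t) * 1" using Me by simp
      then show ?thesis using that by simp
    qed
    finally show False using that by simp
  qed
  show ?thesis
  proof (rule ex1I[of _ th])
    show "th > 0 \<and> (\<Sum>k\<in>K. c k * exp (th * F k)) = 1" using thpos th by (simp add: Mf_def)
    fix y assume y: "y > 0 \<and> (\<Sum>k\<in>K. c k * exp (y * F k)) = 1"
    show "y = th"
    proof (rule ccontr)
      assume "y \<noteq> th"
      then consider "y < th" | "th < y" by linarith
      then show False
        using uniq[of y th] uniq[of th y] y thpos th by (cases; simp add: Mf_def)
    qed
  qed
qed

definition is_eig :: "('i::finite \<Rightarrow> 'i \<Rightarrow> real) \<Rightarrow> complex \<Rightarrow> ('i \<Rightarrow> complex) \<Rightarrow> bool" where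
  "is_eig M z v \<longleftrightarrow> v \<noteq> (\<lambda>_. 0) \<and> (\<forall>i. (\<Sum>j\<in>UNIV. complex_of_real (M i j) * v j) = z * v i)"

lemma eig_bound:
  fixes M :: "'i::finite \<Rightarrow> 'i \<Rightarrow> real"
  assumes "is_eig M z v"
  shows "\<exists>i. cmod z \<le> (\<Sum>j\<in>UNIV. \<bar>M i j\<bar>)"
proof -
  have v0: "v \<noteq> (\<lambda>_. 0)" and ev: "\<And>i. (\<Sum>j\<in>UNIV. complex_of_real (M i j) * v j) = z * v i"
    using assms by (auto simp: is_eig_def)
  define m where "m = Max (range (\<lambda>j. cmod (v j)))"
  have mge: "cmod (v j) \<le> m" for j unfolding m_def by (rule Max_ge) auto
  have "m \<in> range (\<lambda>j. cmod (v j))" unfolding m_def by (rule Max_in) auto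
  then obtain i where i: "cmod (v i) = m" by auto
  have mpos: "m > 0"
  proof (rule ccontr)
    assume "\<not> m > 0"
    then have "\<forall>j. v j = 0" using mge by (metis norm_le_zero_iff order.trans not_less)
    then show False using v0 by auto
  qed
  have "cmod z * m = cmod (z * v i)" using i by (simp add: norm_mult)
  also have "\<dots> = cmod (\<Sum>j\<in>UNIV. complex_of_real (M i j) * v j)" using ev by simp
  also have "\<dots> \<le> (\<Sum>j\<in>UNIV. cmod (complex_of_real (M i j) * v j))" by (rule norm_sum)
  also have "\<dots> \<le> (\<Sum>j\<in>UNIV. \<bar>M i j\<bar> * m)"
    by (rule sum_mono) (auto simp: norm_mult intro!: mult_left_mono mge)
  also have "\<dots> = (\<Sum>j\<in>UNIV. \<bar>M i j\<bar>) * m" by (simp add: sum_distrib_right)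
  finally show ?thesis using mpos by (intro exI[of _ i]) simp
qed

lemma sr_set_eq: "spectral_radius M = Sup {cmod z | z. \<exists>v. is_eig M z v}"
  unfolding spectral_radius_def is_eig_def by simp

lemma sr_ge:
  fixes M :: "'i::finite \<Rightarrow> 'i \<Rightarrow> real"
  assumes "is_eig M z v"
  shows "cmod z \<le> spectral_radius M"
  unfolding sr_set_eq
proof (rule cSup_upper)
  show "cmod z \<in> {cmod z |z. \<exists>v. is_eig M z v}" using assms by blast
  show "bdd_above {cmod z |z. \<exists>v. is_eig M z v}"
  proof (rule bdd_aboveI)
    fix x assume "x \<in> {cmod z |z. \<exists>v. is_eig M z v}"
    then obtain z' v' where x: "x = cmod z'" "is_eig M z' v'" by blast
    obtain i where "cmod z' \<le> (\<Sum>j\<in>UNIV. \<bar>M i j\<bar>)" using eig_bound[OF x(2)] by blast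
    also have "\<dots> \<le> (\<Sum>i\<in>UNIV. \<Sum>j\<in>UNIV. \<bar>M i j\<bar>)"
      by (rule member_le_sum) (auto intro!: sum_nonneg)
    finally show "x \<le> (\<Sum>i\<in>UNIV. \<Sum>j\<in>UNIV. \<bar>M i j\<bar>)" using x by simp
  qed
qed

lemma sr_le:
  fixes M :: "'i::finite \<Rightarrow> 'i \<Rightarrow> real"
  assumes "is_eig M z0 v0" and "\<And>z v. is_eig M z v \<Longrightarrow> cmod z \<le> c"
  shows "spectral_radius M \<le> c"
  unfolding sr_set_eq
  by (rule cSup_least) (use assms in auto)

lemma sr_eq:
  fixes M :: "'i::finite \<Rightarrow> 'i \<Rightarrow> real"
  assumes "is_eig M z0 v0" and "cmod z0 = c" and "\<And>z v. is_eig M z v \<Longrightarrow> cmod z \<le> c"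
  shows "spectral_radius M = c"
  using sr_ge[OF assms(1)] sr_le[OF assms(1,3)] assms(2) by simp

lemma stoch_sr:
  fixes M :: "'i::finite \<Rightarrow> 'i \<Rightarrow> real"
  assumes nn: "\<And>i j. M i j \<ge> 0" and rs: "\<And>i. (\<Sum>j\<in>UNIV. M i j) = 1"
  shows "spectral_radius M = 1"
proof (rule sr_eq)
  show "is_eig M 1 (\<lambda>_. 1)" unfolding is_eig_def
  proof (intro conjI allI)
    show "(\<lambda>_. 1::complex) \<noteq> (\<lambda>_. 0)" by (metis one_neq_zero)
    fix i
    have "(\<Sum>j\<in>UNIV. complex_of_real (M i j) * 1) = complex_of_real (\<Sum>j\<in>UNIV. M i j)" by simp
    then show "(\<Sum>j\<in>UNIV. complex_of_real (M i j) * 1) = 1 * 1" using rs by simp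
  qed
  show "cmod 1 = 1" by simp
  fix z v assume "is_eig M z v"
  from eig_bound[OF this] obtain i where "cmod z \<le> (\<Sum>j\<in>UNIV. \<bar>M i j\<bar>)" by blast
  then show "cmod z \<le> 1" using nn rs by simp
qed

lemma rank1_sr:
  fixes M :: "'i::finite \<Rightarrow> 'i \<Rightarrow> real"
  assumes M: "\<And>i j. M i j = c j" and nn: "\<And>j. c j \<ge> 0"
  shows "spectral_radius M = (\<Sum>j\<in>UNIV. c j)"
proof (rule sr_eq)
  show "is_eig M (complex_of_real (\<Sum>j\<in>UNIV. c j)) (\<lambda>_. 1)" unfolding is_eig_def
    by (auto simp: M) (metis one_neq_zero)
  show "cmod (complex_of_real (\<Sum>j\<in>UNIV. c j)) = (\<Sum>j\<in>UNIV. c j)"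
    using nn by (simp del: of_real_sum add: abs_of_nonneg sum_nonneg)
  fix z v assume e: "is_eig M z v"
  then have v0: "v \<noteq> (\<lambda>_. 0)" and ev: "\<And>i. (\<Sum>j\<in>UNIV. complex_of_real (c j) * v j) = z * v i"
    by (auto simp: is_eig_def M)
  show "cmod z \<le> (\<Sum>j\<in>UNIV. c j)"
  proof (cases "z = 0")
    case True then show ?thesis using nn by (simp add: sum_nonneg)
  next
    case False
    define s where "s = (\<Sum>j\<in>UNIV. complex_of_real (c j) * v j)"
    have vi: "v i = s / z" for i using ev[of i] False by (simp add: s_def field_simps)
    have s0: "s \<noteq> 0" using v0 vi by auto
    have "s = (\<Sum>j\<in>UNIV. complex_of_real (c j) * v j)" by (simp add: s_def)
    also have "\<dots> = (\<Sum>j\<in>UNIV. complex_of_real (c j) * (s / z))" by (simp only: vi)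
    also have "\<dots> = complex_of_real (\<Sum>j\<in>UNIV. c j) * s / z" by (simp add: sum_distrib_right sum_divide_distrib[symmetric])
    finally have "z = complex_of_real (\<Sum>j\<in>UNIV. c j)" using s0 False by (simp add: field_simps)
    then show ?thesis using nn by (simp del: of_real_sum add: abs_of_nonneg sum_nonneg)
  qed
qed

lemma jensen_ln:
  fixes \<nu> t :: "'i \<Rightarrow> real"
  assumes fin: "finite A" and np: "\<And>j. j \<in> A \<Longrightarrow> \<nu> j > 0" and ns: "(\<Sum>j\<in>A. \<nu> j) = 1"
    and tp: "\<And>j. j \<in> A \<Longrightarrow> t j > 0"
  shows "(\<Sum>j\<in>A. \<nu> j * ln (t j)) \<le> ln (\<Sum>j\<in>A. \<nu> j * t j)"
proof -
  define S where "S = (\<Sum>j\<in>A. \<nu> j * t j)"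
  have "A \<noteq> {}" using ns by auto
  then have Sp: "S > 0" unfolding S_def using fin np tp
    by (intro sum_pos) (auto intro: mult_pos_pos)
  have "(\<Sum>j\<in>A. \<nu> j * ln (t j)) - ln S = (\<Sum>j\<in>A. \<nu> j * (ln (t j) - ln S))"
    using ns by (simp add: sum_subtractf right_diff_distrib sum_distrib_right[symmetric])
  also have "\<dots> = (\<Sum>j\<in>A. \<nu> j * ln (t j / S))"
  proof (rule sum.cong[OF refl])
    fix j assume "j \<in> A"
    then show "\<nu> j * (ln (t j) - ln S) = \<nu> j * ln (t j / S)" using tp[of j] Sp by (simp add: ln_div)
  qed
  also have "\<dots> \<le> (\<Sum>j\<in>A. \<nu> j * (t j / S - 1))"
    using tp Sp np by (intro sum_mono mult_left_mono ln_le_minus_one) (auto intro: less_imp_le)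
  also have "\<dots> = 0"
    using Sp ns by (simp add: right_diff_distrib sum_subtractf sum_divide_distrib[symmetric] S_def times_divide_eq_right)
  finally show ?thesis by (simp add: S_def)
qed

lemma sr_lower:
  fixes M :: "'i::finite \<Rightarrow> 'i \<Rightarrow> real" and \<nu> :: "'i \<Rightarrow> real"
  assumes Mpos: "\<And>i j. M i j > 0" and np: "\<And>i. \<nu> i > 0" and ns: "(\<Sum>i\<in>UNIV. \<nu> i) = 1"
  shows "(\<Sum>i\<in>UNIV. \<Sum>j\<in>UNIV. \<nu> i * \<nu> j * ln (M i j / \<nu> j)) \<le> ln (spectral_radius M)"
proof -
  obtain l v where l: "l > 0" and vp: "\<And>i. v i > 0" and ev: "\<And>i. (\<Sum>j\<in>UNIV. M i j * v j) = l * v i"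
    using perron_pos[of M] Mpos by blast
  have "is_eig M (complex_of_real l) (\<lambda>i. complex_of_real (v i))" unfolding is_eig_def
  proof (intro conjI allI)
    show "(\<lambda>i. complex_of_real (v i)) \<noteq> (\<lambda>_. 0)"
    proof
      assume "(\<lambda>i. complex_of_real (v i)) = (\<lambda>_. 0)"
      then have "complex_of_real (v undefined) = 0" by meson
      then show False using vp[of undefined] by simp
    qed
    fix i
    have "(\<Sum>j\<in>UNIV. complex_of_real (M i j) * complex_of_real (v j)) = complex_of_real (\<Sum>j\<in>UNIV. M i j * v j)"
      by simp
    then show "(\<Sum>j\<in>UNIV. complex_of_real (M i j) * complex_of_real (v j)) = complex_of_real l * complex_of_real (v i)"
      using ev by simp
  qed
  from sr_ge[OF this] l have lsr: "l \<le> spectral_radius M" by simp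
  have row: "(\<Sum>j\<in>UNIV. \<nu> j * ln (M i j / \<nu> j)) + (\<Sum>j\<in>UNIV. \<nu> j * ln (v j)) \<le> ln l + ln (v i)" for i
  proof -
    have "(\<Sum>j\<in>UNIV. \<nu> j * ln (M i j / \<nu> j)) + (\<Sum>j\<in>UNIV. \<nu> j * ln (v j))
        = (\<Sum>j\<in>UNIV. \<nu> j * ln (M i j * v j / \<nu> j))"
    proof -
      have "\<nu> j * ln (M i j / \<nu> j) + \<nu> j * ln (v j) = \<nu> j * ln (M i j * v j / \<nu> j)" for j
      proof -
        have "M i j * v j / \<nu> j = (M i j / \<nu> j) * v j" by simp
        moreover have "ln ((M i j / \<nu> j) * v j) = ln (M i j / \<nu> j) + ln (v j)"
          by (rule ln_mult_pos) (use Mpos[of i j] np[of j] vp[of j] in simp_all)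
        ultimately have "ln (M i j * v j / \<nu> j) = ln (M i j / \<nu> j) + ln (v j)" by simp
        then show ?thesis by (simp add: distrib_left)
      qed
      then show ?thesis by (simp add: sum.distrib[symmetric])
    qed
    also have "\<dots> \<le> ln (\<Sum>j\<in>UNIV. \<nu> j * (M i j * v j / \<nu> j))"
      by (rule jensen_ln) (use Mpos np vp ns in auto)
    also have "(\<Sum>j\<in>UNIV. \<nu> j * (M i j * v j / \<nu> j)) = l * v i"
      using np ev by (simp add: less_imp_neq[symmetric])
    also have "ln (l * v i) = ln l + ln (v i)" using l vp[of i] by (simp add: ln_mult_pos)
    finally show ?thesis .
  qed
  have "(\<Sum>i\<in>UNIV. \<nu> i * ((\<Sum>j\<in>UNIV. \<nu> j * ln (M i j / \<nu> j)) + (\<Sum>j\<in>UNIV. \<nu> j * ln (v j))))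
      \<le> (\<Sum>i\<in>UNIV. \<nu> i * (ln l + ln (v i)))"
    by (intro sum_mono mult_left_mono row) (use np in \<open>auto intro: less_imp_le\<close>)
  then have "(\<Sum>i\<in>UNIV. \<Sum>j\<in>UNIV. \<nu> i * \<nu> j * ln (M i j / \<nu> j)) + (\<Sum>j\<in>UNIV. \<nu> j * ln (v j))
      \<le> ln l + (\<Sum>i\<in>UNIV. \<nu> i * ln (v i))"
    using ns by (simp add: distrib_left sum.distrib sum_distrib_left[symmetric] sum_distrib_right[symmetric] mult.assoc)
  then have "(\<Sum>i\<in>UNIV. \<Sum>j\<in>UNIV. \<nu> i * \<nu> j * ln (M i j / \<nu> j)) \<le> ln l" by simp
  also have "ln l \<le> ln (spectral_radius M)" using l lsr by simp
  finally show ?thesis .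
qed

lemma sum_UNIV_pair: "(\<Sum>u\<in>(UNIV::('a::finite\<times>'b::finite) set). h u) = (\<Sum>x\<in>UNIV. \<Sum>y\<in>UNIV. h (x,y))"
  by (subst sum.cartesian_product) (simp add: UNIV_Times_UNIV case_prod_beta')

lemma J_generic:
  fixes M :: "'i::finite \<Rightarrow> 'i \<Rightarrow> real" and \<nu> L :: "'i \<Rightarrow> real" and W :: "'u::finite \<Rightarrow> real"
    and a b :: "'i \<Rightarrow> 'u" and g :: "'u \<times> 'u \<Rightarrow> real"
  assumes Mpos: "\<And>i j. M i j > 0" and np: "\<And>i. \<nu> i > 0" and ns: "(\<Sum>i\<in>UNIV. \<nu> i) = 1"
    and ma: "\<And>\<phi>. (\<Sum>i\<in>UNIV. \<nu> i * \<phi> (a i)) = (\<Sum>u\<in>UNIV. W u * \<phi> u)"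
    and mb: "\<And>\<phi>. (\<Sum>i\<in>UNIV. \<nu> i * \<phi> (b i)) = (\<Sum>u\<in>UNIV. W u * \<phi> u)"
    and lnM: "\<And>i j. ln (M i j / \<nu> j) = g (a i, a j) + g (b i, b j) + L j"
  shows "2 * (\<Sum>u\<in>UNIV. \<Sum>w\<in>UNIV. W u * W w * g (u, w)) + (\<Sum>j\<in>UNIV. \<nu> j * L j)
      \<le> ln (spectral_radius M)"
proof -
  define C where "C = (\<Sum>j\<in>UNIV. \<nu> j * L j)"
  have inner: "(\<Sum>j\<in>UNIV. \<nu> i * \<nu> j * ln (M i j / \<nu> j))
      = \<nu> i * ((\<Sum>w\<in>UNIV. W w * g (a i, w)) + (\<Sum>w\<in>UNIV. W w * g (b i, w)) + C)" for i
  proof -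
    have "(\<Sum>j\<in>UNIV. \<nu> i * \<nu> j * ln (M i j / \<nu> j))
        = \<nu> i * ((\<Sum>j\<in>UNIV. \<nu> j * g (a i, a j)) + (\<Sum>j\<in>UNIV. \<nu> j * g (b i, b j)) + C)"
      by (simp add: lnM C_def sum_distrib_left[symmetric] sum.distrib distrib_left mult.assoc)
    also have "(\<Sum>j\<in>UNIV. \<nu> j * g (a i, a j)) = (\<Sum>w\<in>UNIV. W w * g (a i, w))"
      using ma[of "\<lambda>w. g (a i, w)"] .
    also have "(\<Sum>j\<in>UNIV. \<nu> j * g (b i, b j)) = (\<Sum>w\<in>UNIV. W w * g (b i, w))"
      using mb[of "\<lambda>w. g (b i, w)"] .
    finally show ?thesis .
  qed
  have "(\<Sum>i\<in>UNIV. \<Sum>j\<in>UNIV. \<nu> i * \<nu> j * ln (M i j / \<nu> j))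
      = (\<Sum>i\<in>UNIV. \<nu> i * (\<Sum>w\<in>UNIV. W w * g (a i, w))) + (\<Sum>i\<in>UNIV. \<nu> i * (\<Sum>w\<in>UNIV. W w * g (b i, w))) + C"
    by (simp add: inner distrib_left sum.distrib sum_distrib_right[symmetric] ns)
  also have "(\<Sum>i\<in>UNIV. \<nu> i * (\<Sum>w\<in>UNIV. W w * g (a i, w))) = (\<Sum>u\<in>UNIV. W u * (\<Sum>w\<in>UNIV. W w * g (u, w)))"
    using ma[of "\<lambda>u. \<Sum>w\<in>UNIV. W w * g (u, w)"] .
  also have "(\<Sum>i\<in>UNIV. \<nu> i * (\<Sum>w\<in>UNIV. W w * g (b i, w))) = (\<Sum>u\<in>UNIV. W u * (\<Sum>w\<in>UNIV. W w * g (u, w)))"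
    using mb[of "\<lambda>u. \<Sum>w\<in>UNIV. W w * g (u, w)"] .
  also have "(\<Sum>u\<in>UNIV. W u * (\<Sum>w\<in>UNIV. W w * g (u, w))) = (\<Sum>u\<in>UNIV. \<Sum>w\<in>UNIV. W u * W w * g (u, w))"
    by (simp add: sum_distrib_left mult.assoc)
  finally have "(\<Sum>i\<in>UNIV. \<Sum>j\<in>UNIV. \<nu> i * \<nu> j * ln (M i j / \<nu> j))
     = 2 * (\<Sum>u\<in>UNIV. \<Sum>w\<in>UNIV. W u * W w * g (u, w)) + C" by simp
  then show ?thesis using sr_lower[of M \<nu>, OF Mpos np ns] by (simp add: C_def)
qed

theorem mainTheorem18:
  fixes \<pi>1 \<pi>2 :: "'a::finite \<Rightarrow> real" and f :: "'a \<times> 'a \<Rightarrow> int"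
    and P Q :: "'a \<Rightarrow> 'a \<Rightarrow> real"
  assumes pos1: "\<forall>x. \<pi>1 x > 0" and sum1: "(\<Sum>x\<in>UNIV. \<pi>1 x) = 1"
    and pos2: "\<forall>y. \<pi>2 y > 0" and sum2: "(\<Sum>y\<in>UNIV. \<pi>2 y) = 1"
    and P_def: "P = (\<lambda>x x'. \<pi>1 x')" and Q_def: "Q = (\<lambda>y y'. \<pi>2 y')"
    and neg_mean: "(\<Sum>x\<in>UNIV. \<Sum>y\<in>UNIV. \<pi>1 x * \<pi>2 y * real_of_int (f (x, y))) < 0"
    and pos_somewhere: "\<exists>x y. f (x, y) > 0"
  shows "(\<exists>!\<theta>. \<theta> > 0 \<and> varphi P Q f \<theta> = 1)
    \<and> theta_star P Q f > 0
    \<and> (\<Sum>x\<in>UNIV. \<Sum>y\<in>UNIV. exp (theta_star P Q f * real_of_int (f (x, y))) * \<pi>1 x * \<pi>2 y) = 1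
    \<and> (\<forall>x y. pi_star P Q f (x, y) = exp (theta_star P Q f * real_of_int (f (x, y))) * \<pi>1 x * \<pi>2 y)
    \<and> (let \<theta> = theta_star P Q f; p = pi_star P Q f;
           pf = integ p (\<lambda>u. real_of_int (f u));
           p1 = (\<lambda>x. \<Sum>y\<in>UNIV. p (x, y)); p2 = (\<lambda>y. \<Sum>x\<in>UNIV. p (x, y))
       in J1 P Q f = ereal (2 * \<theta> * pf - rel_entropy p1 \<pi>1)
        \<and> J2 P Q f = ereal (2 * \<theta> * pf - rel_entropy p2 \<pi>2)
        \<and> (2 * min (J1 P Q f) (J2 P Q f) > ereal (3 * \<theta> * pf)
           \<longleftrightarrow> rel_entropy p (\<lambda>(x, y). \<pi>1 x * \<pi>2 y)
                > 2 * max (rel_entropy p1 \<pi>1) (rel_entropy p2 \<pi>2)))"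

proof -
  define Fr where "Fr = (\<lambda>u. real_of_int (f u))"
  define Mf where "Mf = (\<lambda>\<theta>. \<Sum>x\<in>UNIV. \<Sum>y\<in>UNIV. exp (\<theta> * real_of_int (f (x, y))) * \<pi>1 x * \<pi>2 y)"
  have p1p: "\<pi>1 x > 0" for x using pos1 by blast
  have p2p: "\<pi>2 y > 0" for y using pos2 by blast
  have Phi_eq: "Phi P Q f \<theta> u w = exp (\<theta> * Fr w) * \<pi>1 (fst w) * \<pi>2 (snd w)" for \<theta> u w
    by (cases u; cases w) (simp add: Phi_def P_def Q_def Fr_def)
  have varphi_eq: "varphi P Q f \<theta> = Mf \<theta>" for \<theta>
  proof -
    have "varphi P Q f \<theta> = (\<Sum>w\<in>UNIV. exp (\<theta> * Fr w) * \<pi>1 (fst w) * \<pi>2 (snd w))"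
      unfolding varphi_def
      by (rule rank1_sr) (use Phi_eq p1p p2p in \<open>auto intro!: mult_nonneg_nonneg less_imp_le\<close>)
    also have "\<dots> = Mf \<theta>" by (simp add: sum_UNIV_pair Mf_def Fr_def)
    finally show ?thesis .
  qed
  have ex1: "\<exists>!\<theta>. \<theta> > 0 \<and> Mf \<theta> = 1"
  proof -
    obtain x0 y0 where f0: "f (x0, y0) > 0" using pos_somewhere by blast
    have ceq: "(\<Sum>k\<in>UNIV. (\<pi>1 (fst k) * \<pi>2 (snd k)) * exp (\<theta> * Fr k)) = Mf \<theta>" for \<theta>
      by (simp add: sum_UNIV_pair Mf_def Fr_def mult_ac)
    have "\<exists>!\<theta>. \<theta> > 0 \<and> (\<Sum>k\<in>UNIV. (\<pi>1 (fst k) * \<pi>2 (snd k)) * exp (\<theta> * Fr k)) = 1"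
    proof (rule theta_unique[where kk="(x0, y0)"])
      show "finite (UNIV :: ('a \<times> 'a) set)" by simp
      show "\<And>k. k \<in> UNIV \<Longrightarrow> 0 < \<pi>1 (fst k) * \<pi>2 (snd k)" using p1p p2p by simp
      show "(\<Sum>k\<in>UNIV. \<pi>1 (fst k) * \<pi>2 (snd k)) = 1"
        using sum1 sum2 by (simp add: sum_UNIV_pair sum_product[symmetric])
      show "(\<Sum>k\<in>UNIV. \<pi>1 (fst k) * \<pi>2 (snd k) * Fr k) < 0"
        using neg_mean by (simp add: sum_UNIV_pair Fr_def)
      show "(x0, y0) \<in> UNIV" by simp
      show "1 \<le> Fr (x0, y0)" using f0 by (simp add: Fr_def)
    qed
    then show ?thesis by (simp only: ceq)
  qed
  define th where "th = theta_star P Q f"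
  have th: "th > 0" "Mf th = 1"
    using theI'[OF ex1[folded varphi_eq]] by (simp_all add: th_def theta_star_def varphi_eq)
  define W where "W = (\<lambda>u. exp (th * Fr u) * \<pi>1 (fst u) * \<pi>2 (snd u))"
  have Wpos: "W u > 0" for u using p1p p2p by (simp add: W_def)
  have Wsum: "(\<Sum>u\<in>UNIV. W u) = 1"
    using th(2) by (simp add: W_def sum_UNIV_pair Mf_def Fr_def)
  have PhiW: "Phi P Q f (theta_star P Q f) u w = W w" for u w
    by (simp add: Phi_eq W_def th_def)
  have rex: "\<exists>r. (\<forall>u. r u > 0) \<and> (\<forall>u. (\<Sum>w\<in>UNIV. Phi P Q f (theta_star P Q f) u w * r w) = r u)"
    by (rule exI[of _ "\<lambda>_. 1"]) (simp add: PhiW Wsum)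
  have rprop: "(\<forall>u. r_star P Q f u > 0) \<and> (\<forall>u. (\<Sum>w\<in>UNIV. Phi P Q f (theta_star P Q f) u w * r_star P Q f w) = r_star P Q f u)"
    unfolding r_star_def by (rule someI_ex[OF rex])
  have rfix: "r_star P Q f u = (\<Sum>w\<in>UNIV. W w * r_star P Q f w)" for u
    using rprop by (cases u) (simp add: PhiW)
  have rconst: "r_star P Q f u = r_star P Q f u'" for u u'
    using rfix[of u] rfix[of u'] by simp
  have Req: "R_star P Q f u w = W w" for u w
  proof -
    have "r_star P Q f u > 0" using rprop by blast
    then show ?thesis unfolding R_star_def PhiW using rconst[of w u] by simp
  qed
  have pex: "\<exists>p. (\<forall>u. p u \<ge> 0) \<and> (\<Sum>u\<in>UNIV. p u) = 1 \<and> (\<forall>w. (\<Sum>u\<in>UNIV. p u * R_star P Q f u w) = p w)"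
    by (rule exI[of _ W]) (simp add: Req Wsum less_imp_le[OF Wpos] sum_distrib_right[symmetric])
  have pprop: "(\<forall>u. pi_star P Q f u \<ge> 0) \<and> (\<Sum>u\<in>UNIV. pi_star P Q f u) = 1 \<and> (\<forall>w. (\<Sum>u\<in>UNIV. pi_star P Q f u * R_star P Q f u w) = pi_star P Q f w)"
    unfolding pi_star_def by (rule someI_ex[OF pex])
  have piW: "pi_star P Q f = W"
  proof
    fix w
    have "pi_star P Q f w = (\<Sum>u\<in>UNIV. pi_star P Q f u * R_star P Q f u w)" using pprop by (cases w) simp
    also have "\<dots> = W w" using pprop by (simp add: Req sum_distrib_right[symmetric])
    finally show "pi_star P Q f w = W w" .
  qed
  have pihat: "pi_hat P Q f (u, w) = W u * W w" for u w
    by (simp add: pi_hat_def piW Req)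
  have integ_hat: "integ (pi_hat P Q f) g = (\<Sum>u\<in>UNIV. \<Sum>w\<in>UNIV. W u * W w * g (u, w))" for g
    by (simp add: integ_def sum_UNIV_pair[of "\<lambda>v. pi_hat P Q f v * g v"] pihat)
  define p1 where "p1 = (\<lambda>x. \<Sum>y\<in>UNIV. W (x, y))"
  define p2 where "p2 = (\<lambda>y. \<Sum>x\<in>UNIV. W (x, y))"
  define pf where "pf = (\<Sum>u\<in>UNIV. W u * Fr u)"
  define H1 where "H1 = rel_entropy p1 \<pi>1"
  define H2 where "H2 = rel_entropy p2 \<pi>2"
  define l1 where "l1 = (\<lambda>x. ln (p1 x / \<pi>1 x))"
  define l2 where "l2 = (\<lambda>y. ln (p2 y / \<pi>2 y))"
  have p1pos: "p1 x > 0" for x unfolding p1_def by (intro sum_pos) (auto intro: Wpos)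
  have p2pos: "p2 y > 0" for y unfolding p2_def by (intro sum_pos) (auto intro: Wpos)
  have sum3: "(\<Sum>i\<in>UNIV. h i) = (\<Sum>x\<in>UNIV. \<Sum>y\<in>UNIV. \<Sum>z\<in>UNIV. h (x, y, z))" for h :: "'a \<times> 'a \<times> 'a \<Rightarrow> real"
    by (simp add: sum_UNIV_pair)
  have H1eq: "(\<Sum>u\<in>UNIV. W u * l1 (fst u)) = H1"
    by (simp add: sum_UNIV_pair H1_def rel_entropy_def p1_def l1_def sum_distrib_right)
  have H2eq: "(\<Sum>u\<in>UNIV. W u * l2 (snd u)) = H2"
  proof -
    have "(\<Sum>u\<in>UNIV. W u * l2 (snd u)) = (\<Sum>x\<in>UNIV. \<Sum>y\<in>UNIV. W (x, y) * l2 y)"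
      by (simp add: sum_UNIV_pair)
    also have "\<dots> = (\<Sum>y\<in>UNIV. \<Sum>x\<in>UNIV. W (x, y) * l2 y)" by (rule sum.swap)
    also have "\<dots> = (\<Sum>y\<in>UNIV. p2 y * l2 y)" by (simp add: p2_def sum_distrib_right)
    finally show ?thesis by (simp add: H2_def rel_entropy_def l2_def)
  qed
  have hatconst: "(\<Sum>u\<in>UNIV. \<Sum>w\<in>UNIV. W u * W w * h w) = (\<Sum>w\<in>UNIV. W w * h w)" for h
  proof -
    have "(\<Sum>u\<in>UNIV. \<Sum>w\<in>UNIV. W u * W w * h w) = (\<Sum>u\<in>UNIV. W u * (\<Sum>w\<in>UNIV. W w * h w))"
      by (simp add: sum_distrib_left mult.assoc)
    also have "\<dots> = (\<Sum>w\<in>UNIV. W w * h w)" by (simp add: sum_distrib_right[symmetric] Wsum)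
    finally show ?thesis .
  qed
  have J1eq: "J1 P Q f = ereal (2 * th * pf - H1)"
  proof -
    define \<nu> where "\<nu> = (\<lambda>i::'a\<times>'a\<times>'a. W (fst i, fst (snd i)) * W (fst i, snd (snd i)) / p1 (fst i))"
    define a where "a = (\<lambda>i::'a\<times>'a\<times>'a. (fst i, fst (snd i)))"
    define b where "b = (\<lambda>i::'a\<times>'a\<times>'a. (fst i, snd (snd i)))"
    define L where "L = (\<lambda>j. - th * Fr (a j) - th * Fr (b j) + l1 (fst j))"
    have ma: "(\<Sum>i\<in>UNIV. \<nu> i * \<phi> (a i)) = (\<Sum>u\<in>UNIV. W u * \<phi> u)" for \<phi>
    proof -
      have "(\<Sum>i\<in>UNIV. \<nu> i * \<phi> (a i)) = (\<Sum>x\<in>UNIV. \<Sum>y\<in>UNIV. \<Sum>z\<in>UNIV. W (x, y) * W (x, z) / p1 x * \<phi> (x, y))"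
        by (simp add: sum3 \<nu>_def a_def)
      also have "\<dots> = (\<Sum>x\<in>UNIV. \<Sum>y\<in>UNIV. W (x, y) * \<phi> (x, y))"
      proof (intro sum.cong refl)
        fix x y
        have "(\<Sum>z\<in>UNIV. W (x, y) * W (x, z) / p1 x * \<phi> (x, y)) = W (x, y) * \<phi> (x, y) * ((\<Sum>z\<in>UNIV. W (x, z)) / p1 x)"
          by (simp add: sum_distrib_left sum_divide_distrib mult_ac)
        also have "(\<Sum>z\<in>UNIV. W (x, z)) / p1 x = 1" using p1pos[of x] by (simp add: p1_def)
        finally show "(\<Sum>z\<in>UNIV. W (x, y) * W (x, z) / p1 x * \<phi> (x, y)) = W (x, y) * \<phi> (x, y)" by simp
      qed
      also have "\<dots> = (\<Sum>u\<in>UNIV. W u * \<phi> u)" by (simp add: sum_UNIV_pair)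
      finally show ?thesis .
    qed
    have mb: "(\<Sum>i\<in>UNIV. \<nu> i * \<phi> (b i)) = (\<Sum>u\<in>UNIV. W u * \<phi> u)" for \<phi>
    proof -
      have "(\<Sum>i\<in>UNIV. \<nu> i * \<phi> (b i)) = (\<Sum>x\<in>UNIV. \<Sum>y\<in>UNIV. \<Sum>z\<in>UNIV. W (x, y) * W (x, z) / p1 x * \<phi> (x, z))"
        by (simp add: sum3 \<nu>_def b_def)
      also have "\<dots> = (\<Sum>x\<in>UNIV. \<Sum>z\<in>UNIV. \<Sum>y\<in>UNIV. W (x, y) * W (x, z) / p1 x * \<phi> (x, z))"
        by (intro sum.cong refl sum.swap)
      also have "\<dots> = (\<Sum>x\<in>UNIV. \<Sum>z\<in>UNIV. W (x, z) * \<phi> (x, z))"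
      proof (intro sum.cong refl)
        fix x z
        have "(\<Sum>y\<in>UNIV. W (x, y) * W (x, z) / p1 x * \<phi> (x, z)) = W (x, z) * \<phi> (x, z) * ((\<Sum>y\<in>UNIV. W (x, y)) / p1 x)"
          by (simp add: sum_distrib_left sum_divide_distrib mult_ac)
        also have "(\<Sum>y\<in>UNIV. W (x, y)) / p1 x = 1" using p1pos[of x] by (simp add: p1_def)
        finally show "(\<Sum>y\<in>UNIV. W (x, y) * W (x, z) / p1 x * \<phi> (x, z)) = W (x, z) * \<phi> (x, z)" by simp
      qed
      also have "\<dots> = (\<Sum>u\<in>UNIV. W u * \<phi> u)" by (simp add: sum_UNIV_pair)
      finally show ?thesis .
    qed
    have np: "\<nu> i > 0" for i using Wpos p1pos by (simp add: \<nu>_def)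
    have ns: "(\<Sum>i\<in>UNIV. \<nu> i) = 1" using ma[of "\<lambda>_. 1"] Wsum by simp
    have nL: "(\<Sum>j\<in>UNIV. \<nu> j * L j) = - th * pf - th * pf + H1"
    proof -
      have "(\<Sum>j\<in>UNIV. \<nu> j * L j) = (\<Sum>j\<in>UNIV. - th * (\<nu> j * Fr (a j)) + - th * (\<nu> j * Fr (b j))
          + \<nu> j * (\<lambda>u. l1 (fst u)) (a j))"
        by (intro sum.cong refl) (simp add: L_def a_def algebra_simps)
      also have "\<dots> = - th * (\<Sum>j\<in>UNIV. \<nu> j * Fr (a j)) + - th * (\<Sum>j\<in>UNIV. \<nu> j * Fr (b j))
          + (\<Sum>j\<in>UNIV. \<nu> j * (\<lambda>u. l1 (fst u)) (a j))"
        by (simp only: sum.distrib sum_distrib_left)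
      also have "\<dots> = - th * pf - th * pf + H1"
        using ma[of "\<lambda>u. l1 (fst u)"] ma[of Fr] mb[of Fr] H1eq by (simp add: pf_def)
      finally show ?thesis .
    qed
    have upper: "2 * integ (pi_hat P Q f) g - ln (spectral_radius (Phi1 P Q g)) \<le> 2 * th * pf - H1" for g
    proof -
      have Mpos: "Phi1 P Q g i j > 0" for i j
        using p1p p2p by (cases i; cases j) (simp add: Phi1_def P_def Q_def)
      have lnM: "ln (Phi1 P Q g i j / \<nu> j) = g (a i, a j) + g (b i, b j) + L j" for i j
      proof -
        obtain x y z where i: "i = (x, y, z)" by (cases i) auto
        obtain x' y' z' where j: "j = (x', y', z')" by (cases j) auto
        define G where "G = g ((x, y), (x', y')) + g ((x, z), (x', z'))"
        have "Phi1 P Q g i j / \<nu> j = exp (G + (- th * Fr (x', y') - th * Fr (x', z'))) * (p1 x' / \<pi>1 x')"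
          using p1p[of x'] p2p[of y'] p2p[of z'] p1pos[of x']
          by (simp add: i j G_def Phi1_def P_def Q_def \<nu>_def W_def exp_add exp_diff exp_minus field_simps)
        also have "ln \<dots> = G + (- th * Fr (x', y') - th * Fr (x', z')) + ln (p1 x' / \<pi>1 x')"
          by (simp only: ln_mult_pos[OF exp_gt_zero divide_pos_pos[OF p1pos p1p]] ln_exp)
        finally show ?thesis by (simp add: i j G_def L_def a_def b_def l1_def)
      qed
      have "2 * (\<Sum>u\<in>UNIV. \<Sum>w\<in>UNIV. W u * W w * g (u, w)) + (\<Sum>j\<in>UNIV. \<nu> j * L j)
          \<le> ln (spectral_radius (Phi1 P Q g))"
        by (rule J_generic[where a = a and b = b]) (use Mpos np ns ma mb lnM in auto)
      then show ?thesis using nL by (simp add: integ_hat mult_ac)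
    qed
    define g0 where "g0 = (\<lambda>(u::'a\<times>'a, w::'a\<times>'a). th * Fr w - l1 (fst w) / 2)"
    have Pg0: "Phi1 P Q g0 i j = \<nu> j" for i j
    proof -
      obtain x y z where i: "i = (x, y, z)" by (cases i) auto
      obtain x' y' z' where j: "j = (x', y', z')" by (cases j) auto
      have e: "th * Fr (x', y') - l1 x' / 2 + (th * Fr (x', z') - l1 x' / 2) = th * Fr (x', y') + th * Fr (x', z') - l1 x'"
        by simp
      have el: "exp (l1 x') = p1 x' / \<pi>1 x'" using p1p[of x'] p1pos[of x'] by (simp add: l1_def)
      have "Phi1 P Q g0 i j = exp (th * Fr (x', y') + th * Fr (x', z') - l1 x') * \<pi>1 x' * \<pi>2 y' * \<pi>2 z'"
        by (simp only: i j g0_def Phi1_def P_def Q_def prod.case fst_conv e)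
      also have "\<dots> = exp (th * Fr (x', y')) * exp (th * Fr (x', z')) / (p1 x' / \<pi>1 x') * \<pi>1 x' * \<pi>2 y' * \<pi>2 z'"
        by (simp only: exp_diff exp_add el)
      also have "\<dots> = \<nu> j"
        using p1p[of x'] p2p[of y'] p2p[of z'] p1pos[of x']
        by (simp add: j \<nu>_def W_def field_simps)
      finally show ?thesis .
    qed
    have sr0: "spectral_radius (Phi1 P Q g0) = 1"
      by (rule stoch_sr) (use np ns Pg0 in \<open>auto intro: less_imp_le\<close>)
    have val0: "2 * integ (pi_hat P Q f) g0 - ln (spectral_radius (Phi1 P Q g0)) = 2 * th * pf - H1"
    proof -
      have "integ (pi_hat P Q f) g0 = (\<Sum>w\<in>UNIV. W w * (th * Fr w - l1 (fst w) / 2))"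
        unfolding integ_hat g0_def by (simp add: hatconst[of "\<lambda>w. th * Fr w - l1 (fst w) / 2", symmetric])
      also have "\<dots> = th * pf - H1 / 2"
        by (simp add: right_diff_distrib sum_subtractf pf_def sum_distrib_left H1eq[symmetric] sum_divide_distrib mult_ac)
      finally show ?thesis using sr0 by simp
    qed
    show ?thesis unfolding J1_def
    proof (rule antisym)
      show "(SUP g. ereal (2 * integ (pi_hat P Q f) g - ln (spectral_radius (Phi1 P Q g)))) \<le> ereal (2 * th * pf - H1)"
        by (rule SUP_least) (use upper in simp)
      show "ereal (2 * th * pf - H1) \<le> (SUP g. ereal (2 * integ (pi_hat P Q f) g - ln (spectral_radius (Phi1 P Q g))))"
        by (rule SUP_upper2[of g0]) (use val0 in simp_all)
    qed
  qed
  have J2eq: "J2 P Q f = ereal (2 * th * pf - H2)"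
  proof -
    define \<nu> where "\<nu> = (\<lambda>i::'a\<times>'a\<times>'a. W (fst i, snd (snd i)) * W (fst (snd i), snd (snd i)) / p2 (snd (snd i)))"
    define a where "a = (\<lambda>i::'a\<times>'a\<times>'a. (fst i, snd (snd i)))"
    define b where "b = (\<lambda>i::'a\<times>'a\<times>'a. (fst (snd i), snd (snd i)))"
    define L where "L = (\<lambda>j. - th * Fr (a j) - th * Fr (b j) + l2 (snd (snd j)))"
    have ma: "(\<Sum>i\<in>UNIV. \<nu> i * \<phi> (a i)) = (\<Sum>u\<in>UNIV. W u * \<phi> u)" for \<phi>
    proof -
      have "(\<Sum>i\<in>UNIV. \<nu> i * \<phi> (a i)) = (\<Sum>x\<in>UNIV. \<Sum>w\<in>UNIV. \<Sum>y\<in>UNIV. W (x, y) * W (w, y) / p2 y * \<phi> (x, y))"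
        by (simp add: sum3 \<nu>_def a_def)
      also have "\<dots> = (\<Sum>x\<in>UNIV. \<Sum>y\<in>UNIV. \<Sum>w\<in>UNIV. W (x, y) * W (w, y) / p2 y * \<phi> (x, y))"
        by (intro sum.cong refl sum.swap)
      also have "\<dots> = (\<Sum>x\<in>UNIV. \<Sum>y\<in>UNIV. W (x, y) * \<phi> (x, y))"
      proof (intro sum.cong refl)
        fix x y
        have "(\<Sum>w\<in>UNIV. W (x, y) * W (w, y) / p2 y * \<phi> (x, y)) = W (x, y) * \<phi> (x, y) * ((\<Sum>w\<in>UNIV. W (w, y)) / p2 y)"
          by (simp add: sum_distrib_left sum_divide_distrib mult_ac)
        also have "(\<Sum>w\<in>UNIV. W (w, y)) / p2 y = 1" using p2pos[of y] by (simp add: p2_def)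
        finally show "(\<Sum>w\<in>UNIV. W (x, y) * W (w, y) / p2 y * \<phi> (x, y)) = W (x, y) * \<phi> (x, y)" by simp
      qed
      also have "\<dots> = (\<Sum>u\<in>UNIV. W u * \<phi> u)" by (simp add: sum_UNIV_pair)
      finally show ?thesis .
    qed
    have mb: "(\<Sum>i\<in>UNIV. \<nu> i * \<phi> (b i)) = (\<Sum>u\<in>UNIV. W u * \<phi> u)" for \<phi>
    proof -
      have "(\<Sum>i\<in>UNIV. \<nu> i * \<phi> (b i)) = (\<Sum>x\<in>UNIV. \<Sum>w\<in>UNIV. \<Sum>y\<in>UNIV. W (x, y) * W (w, y) / p2 y * \<phi> (w, y))"
        by (simp add: sum3 \<nu>_def b_def)
      also have "\<dots> = (\<Sum>w\<in>UNIV. \<Sum>x\<in>UNIV. \<Sum>y\<in>UNIV. W (x, y) * W (w, y) / p2 y * \<phi> (w, y))"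
        by (rule sum.swap)
      also have "\<dots> = (\<Sum>w\<in>UNIV. \<Sum>y\<in>UNIV. \<Sum>x\<in>UNIV. W (x, y) * W (w, y) / p2 y * \<phi> (w, y))"
        by (intro sum.cong refl sum.swap)
      also have "\<dots> = (\<Sum>w\<in>UNIV. \<Sum>y\<in>UNIV. W (w, y) * \<phi> (w, y))"
      proof (intro sum.cong refl)
        fix w y
        have "(\<Sum>x\<in>UNIV. W (x, y) * W (w, y) / p2 y * \<phi> (w, y)) = W (w, y) * \<phi> (w, y) * ((\<Sum>x\<in>UNIV. W (x, y)) / p2 y)"
          by (simp add: sum_distrib_left sum_divide_distrib mult_ac)
        also have "(\<Sum>x\<in>UNIV. W (x, y)) / p2 y = 1" using p2pos[of y] by (simp add: p2_def)
        finally show "(\<Sum>x\<in>UNIV. W (x, y) * W (w, y) / p2 y * \<phi> (w, y)) = W (w, y) * \<phi> (w, y)" by simp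
      qed
      also have "\<dots> = (\<Sum>u\<in>UNIV. W u * \<phi> u)" by (simp add: sum_UNIV_pair)
      finally show ?thesis .
    qed
    have np: "\<nu> i > 0" for i using Wpos p2pos by (simp add: \<nu>_def)
    have ns: "(\<Sum>i\<in>UNIV. \<nu> i) = 1" using ma[of "\<lambda>_. 1"] Wsum by simp
    have nL: "(\<Sum>j\<in>UNIV. \<nu> j * L j) = - th * pf - th * pf + H2"
    proof -
      have "(\<Sum>j\<in>UNIV. \<nu> j * L j) = (\<Sum>j\<in>UNIV. - th * (\<nu> j * Fr (a j)) + - th * (\<nu> j * Fr (b j))
          + \<nu> j * (\<lambda>u. l2 (snd u)) (a j))"
        by (intro sum.cong refl) (simp add: L_def a_def algebra_simps)
      also have "\<dots> = - th * (\<Sum>j\<in>UNIV. \<nu> j * Fr (a j)) + - th * (\<Sum>j\<in>UNIV. \<nu> j * Fr (b j))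
          + (\<Sum>j\<in>UNIV. \<nu> j * (\<lambda>u. l2 (snd u)) (a j))"
        by (simp only: sum.distrib sum_distrib_left)
      also have "\<dots> = - th * pf - th * pf + H2"
        using ma[of "\<lambda>u. l2 (snd u)"] ma[of Fr] mb[of Fr] H2eq by (simp add: pf_def)
      finally show ?thesis .
    qed
    have upper: "2 * integ (pi_hat P Q f) g - ln (spectral_radius (Phi2 P Q g)) \<le> 2 * th * pf - H2" for g
    proof -
      have Mpos: "Phi2 P Q g i j > 0" for i j
        using p1p p2p by (cases i; cases j) (simp add: Phi2_def P_def Q_def)
      have lnM: "ln (Phi2 P Q g i j / \<nu> j) = g (a i, a j) + g (b i, b j) + L j" for i j
      proof -
        obtain x w y where i: "i = (x, w, y)" by (cases i) auto
        obtain x' w' y' where j: "j = (x', w', y')" by (cases j) auto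
        define G where "G = g ((x, y), (x', y')) + g ((w, y), (w', y'))"
        have "Phi2 P Q g i j / \<nu> j = exp (G + (- th * Fr (x', y') - th * Fr (w', y'))) * (p2 y' / \<pi>2 y')"
          using p1p[of x'] p1p[of w'] p2p[of y'] p2pos[of y']
          by (simp add: i j G_def Phi2_def P_def Q_def \<nu>_def W_def exp_add exp_diff exp_minus field_simps)
        also have "ln \<dots> = G + (- th * Fr (x', y') - th * Fr (w', y')) + ln (p2 y' / \<pi>2 y')"
          by (simp only: ln_mult_pos[OF exp_gt_zero divide_pos_pos[OF p2pos p2p]] ln_exp)
        finally show ?thesis by (simp add: i j G_def L_def a_def b_def l2_def)
      qed
      have "2 * (\<Sum>u\<in>UNIV. \<Sum>w\<in>UNIV. W u * W w * g (u, w)) + (\<Sum>j\<in>UNIV. \<nu> j * L j)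
          \<le> ln (spectral_radius (Phi2 P Q g))"
        by (rule J_generic[where a = a and b = b]) (use Mpos np ns ma mb lnM in auto)
      then show ?thesis using nL by (simp add: integ_hat mult_ac)
    qed
    define g0 where "g0 = (\<lambda>(u::'a\<times>'a, w::'a\<times>'a). th * Fr w - l2 (snd w) / 2)"
    have Pg0: "Phi2 P Q g0 i j = \<nu> j" for i j
    proof -
      obtain x w y where i: "i = (x, w, y)" by (cases i) auto
      obtain x' w' y' where j: "j = (x', w', y')" by (cases j) auto
      have e: "th * Fr (x', y') - l2 y' / 2 + (th * Fr (w', y') - l2 y' / 2) = th * Fr (x', y') + th * Fr (w', y') - l2 y'"
        by simp
      have el: "exp (l2 y') = p2 y' / \<pi>2 y'" using p2p[of y'] p2pos[of y'] by (simp add: l2_def)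
      have "Phi2 P Q g0 i j = exp (th * Fr (x', y') + th * Fr (w', y') - l2 y') * \<pi>1 x' * \<pi>1 w' * \<pi>2 y'"
        by (simp only: i j g0_def Phi2_def P_def Q_def prod.case snd_conv e)
      also have "\<dots> = exp (th * Fr (x', y')) * exp (th * Fr (w', y')) / (p2 y' / \<pi>2 y') * \<pi>1 x' * \<pi>1 w' * \<pi>2 y'"
        by (simp only: exp_diff exp_add el)
      also have "\<dots> = \<nu> j"
        using p1p[of x'] p1p[of w'] p2p[of y'] p2pos[of y']
        by (simp add: j \<nu>_def W_def field_simps)
      finally show ?thesis .
    qed
    have sr0: "spectral_radius (Phi2 P Q g0) = 1"
      by (rule stoch_sr) (use np ns Pg0 in \<open>auto intro: less_imp_le\<close>)
    have val0: "2 * integ (pi_hat P Q f) g0 - ln (spectral_radius (Phi2 P Q g0)) = 2 * th * pf - H2"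
    proof -
      have "integ (pi_hat P Q f) g0 = (\<Sum>w\<in>UNIV. W w * (th * Fr w - l2 (snd w) / 2))"
        unfolding integ_hat g0_def by (simp add: hatconst[of "\<lambda>w. th * Fr w - l2 (snd w) / 2", symmetric])
      also have "\<dots> = th * pf - H2 / 2"
        by (simp add: right_diff_distrib sum_subtractf pf_def sum_distrib_left H2eq[symmetric] sum_divide_distrib mult_ac)
      finally show ?thesis using sr0 by simp
    qed
    show ?thesis unfolding J2_def
    proof (rule antisym)
      show "(SUP g. ereal (2 * integ (pi_hat P Q f) g - ln (spectral_radius (Phi2 P Q g)))) \<le> ereal (2 * th * pf - H2)"
        by (rule SUP_least) (use upper in simp)
      show "ereal (2 * th * pf - H2) \<le> (SUP g. ereal (2 * integ (pi_hat P Q f) g - ln (spectral_radius (Phi2 P Q g))))"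
        by (rule SUP_upper2[of g0]) (use val0 in simp_all)
    qed
  qed
  have relW: "rel_entropy W (\<lambda>(x, y). \<pi>1 x * \<pi>2 y) = th * pf"
  proof -
    have "ln (W u / (case u of (x, y) \<Rightarrow> \<pi>1 x * \<pi>2 y)) = th * Fr u" for u
      using p1p p2p by (cases u) (simp add: W_def less_imp_neq[symmetric])
    then show ?thesis by (simp add: rel_entropy_def pf_def sum_distrib_left mult_ac)
  qed
  have minE: "2 * min (ereal A) (ereal B) = ereal (2 * min A B)" for A B
    by (cases "A \<le> B") (auto simp: min_def)
  have iff: "(2 * min (ereal (2 * th * pf - H1)) (ereal (2 * th * pf - H2)) > ereal (3 * th * pf))
      \<longleftrightarrow> th * pf > 2 * max H1 H2"
    unfolding minE less_ereal.simps by (auto simp: min_def max_def mult.commute)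
  have integf: "integ W (\<lambda>u. real_of_int (f u)) = pf"
    by (simp add: integ_def pf_def Fr_def)
  show ?thesis
    unfolding Let_def piW th_def[symmetric] integf p1_def[symmetric] p2_def[symmetric]
      H1_def[symmetric] H2_def[symmetric] relW
  proof (intro conjI)
    show "\<exists>!\<theta>. \<theta> > 0 \<and> varphi P Q f \<theta> = 1" using ex1 by (simp add: varphi_eq)
  qed (use th J1eq J2eq iff in \<open>simp_all add: Mf_def W_def Fr_def\<close>)
qed

end
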